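(* (i) For $g\ge1$, $H_0(\mathsf{Sp}(2g,2),Y)=0$ and $H_0(\mathsf{Sp}(2g,2),U)=0$. (ii) For $g\ge2$, $H_0(\mathsf{Sp}(2g,2),Z)=0$ and $H_0(\mathsf{Sp}(2g,2),\mathfrak{sp}(2g,2))=0$.
   Context: $\mathsf{Sp}(2g,2)$ is the symplectic group over $\mathbb F_2$ for the form $J=\begin{pmatrix}0&I\\-I&0\end{pmatrix}$, $U=\mathbb F_2^{2g}$ its natural module. $\mathfrak{sp}(2g,2)$ is the $\mathbb F_2$-space of matrices $\begin{pmatrix}\mathrm a&\mathrm b\\\mathrm c&\mathrm a^t\end{pmatrix}$ over $\mathbb F_2$ with $\mathrm b,\mathrm c$ symmetric $g\times g$, with $\mathsf{Sp}(2g,2)$ acting by conjugation. $Y\subseteq\mathfrak{sp}(2g,2)$ is the submodule of such matrices with $\mathsf{Diag}(\mathrm b)=\mathsf{Diag}(\mathrm c)=0$ and $\mathsf{Tr}(\mathrm a)=0$, and $Z=\mathfrak{sp}(2g,2)/Y$ (of dimension $2g+1$). $H_0(G,M)$ denotes the coinvariants $M/\langle gm-m\rangle$. *)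

theory Defs
  imports "HOL-Library.Z2" "Jordan_Normal_Form.Matrix"
begin

text \<open>F_2 is the field type bit. Matrices/vectors are Jordan_Normal_Form matrices/vectors
  with explicit dimensions; indices 0..g-1 are the first block, g..2g-1 the second.\<close>

definition Jform :: "nat \<Rightarrow> bit mat" where
  "Jform g = mat (2*g) (2*g) (\<lambda>(i,j).
      if i < g \<and> j = i + g then 1 else if g \<le> i \<and> j + g = i then - 1 else 0)"

definition Sp2 :: "nat \<Rightarrow> bit mat set" where
  "Sp2 g = {A \<in> carrier_mat (2*g) (2*g). transpose_mat A * Jform g * A = Jform g}"

text \<open>sp(2g,2): block matrices (a b; c a^t) with b, c symmetric.\<close>
definition sp2 :: "nat \<Rightarrow> bit mat set" where
  "sp2 g = {X \<in> carrier_mat (2*g) (2*g).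
     (\<forall>i<g. \<forall>j<g. X $$ (i+g, j+g) = X $$ (j, i)
                  \<and> X $$ (i, j+g) = X $$ (j, i+g)
                  \<and> X $$ (i+g, j) = X $$ (j+g, i))}"

definition Ysub :: "nat \<Rightarrow> bit mat set" where
  "Ysub g = {X \<in> sp2 g. (\<forall>i<g. X $$ (i, i+g) = 0 \<and> X $$ (i+g, i) = 0)
                       \<and> (\<Sum>i<g. X $$ (i, i)) = 0}"

text \<open>F_2-span (= additive closure, since the scalars are 0 and 1) of a set S,
  with zero element z.\<close>
inductive_set f2_span :: "'a \<Rightarrow> 'a set \<Rightarrow> ('a::plus) set" for z S where
  zero: "z \<in> f2_span z S"
| add: "x \<in> S \<Longrightarrow> y \<in> f2_span z S \<Longrightarrow> x + y \<in> f2_span z S"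

text \<open>Generators g.m - m of the coinvariant relations, for the conjugation action on matrices
  (A X A^{-1}) and the natural action on U.\<close>
definition conj_rel :: "nat \<Rightarrow> bit mat set \<Rightarrow> bit mat set" where
  "conj_rel g M = {A * X * B - X | A B X. A \<in> Sp2 g \<and> B \<in> carrier_mat (2*g) (2*g)
                      \<and> A * B = 1\<^sub>m (2*g) \<and> X \<in> M}"

definition nat_rel :: "nat \<Rightarrow> bit vec set" where
  "nat_rel g = {A *\<^sub>v v - v | A v. A \<in> Sp2 g \<and> v \<in> carrier_vec (2*g)}"

text \<open>H_0(G,M) = 0 means M is spanned by the g.m - m.\<close>
definition H0_conj_zero :: "nat \<Rightarrow> bit mat set \<Rightarrow> bool" where
  "H0_conj_zero g M \<longleftrightarrow> M \<subseteq> f2_span (0\<^sub>m (2*g) (2*g)) (conj_rel g M)"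

definition H0_U_zero :: "nat \<Rightarrow> bool" where
  "H0_U_zero g \<longleftrightarrow> carrier_vec (2*g) \<subseteq> f2_span (0\<^sub>v (2*g)) (nat_rel g)"

text \<open>H_0(G, M/N) = 0 for the quotient module Z = sp/Y: every element of M is congruent
  mod N to an element of the span of the X' - X (images of g.[X]-[X]).\<close>
definition H0_conj_quot_zero :: "nat \<Rightarrow> bit mat set \<Rightarrow> bit mat set \<Rightarrow> bool" where
  "H0_conj_quot_zero g M N \<longleftrightarrow>
     (\<forall>X\<in>M. \<exists>W\<in>f2_span (0\<^sub>m (2*g) (2*g)) (conj_rel g M). X - W \<in> N)"

end

theory Submission
  imports Defs
begin

declare add_bit_eq_xor[simp del] mult_bit_eq_and[simp del]

lemma bit_add_self[simp]: "(x::bit) + x = 0" by (cases x) simp_all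

lemma ob_add[simp]: "of_bool P + of_bool Q = (of_bool (P \<noteq> Q) :: bit)" by auto
lemma ob_mult[simp]: "of_bool P * of_bool Q = (of_bool (P \<and> Q) :: bit)" by auto
lemma ob_eq[simp]: "(of_bool P = (of_bool Q :: bit)) = (P = Q)" by auto
lemma bit_minus[simp]: "(x::bit) - y = x + y" by simp

definition sg :: "nat \<Rightarrow> nat \<Rightarrow> nat" where
  "sg g i = (if i < g then i + g else i - g)"

lemma mult3_entry:
  assumes "A \<in> carrier_mat n n" "X \<in> carrier_mat n n" "B \<in> carrier_mat n n" "i < n" "j < n"
  shows "(A * X * B) $$ (i,j) = (\<Sum>k<n. \<Sum>l<n. A $$ (i,k) * X $$ (k,l) * B $$ (l,j))"
proof -
  have "(A * X * B) $$ (i,j) = (\<Sum>k<n. A $$ (i,k) * (\<Sum>l<n. X $$ (k,l) * B $$ (l,j)))"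
    using assms by (simp add: scalar_prod_def lessThan_atLeast0)
  also have "\<dots> = (\<Sum>k<n. \<Sum>l<n. A $$ (i,k) * X $$ (k,l) * B $$ (l,j))"
    by (simp add: sum_distrib_left mult.assoc)
  finally show ?thesis .
qed

lemma Jform_entry: "k < 2*g \<Longrightarrow> l < 2*g \<Longrightarrow> Jform g $$ (k,l) = of_bool (l = sg g k)"
  by (auto simp: Jform_def sg_def)

lemma sg_lt: "i < 2*g \<Longrightarrow> sg g i < 2*g" by (auto simp: sg_def)
lemma sg_sg: "i < 2*g \<Longrightarrow> sg g (sg g i) = i" by (auto simp: sg_def)
lemma sg_eq: "i < 2*g \<Longrightarrow> j < 2*g \<Longrightarrow> (sg g i = j) = (i = sg g j)" by (auto simp: sg_def)

lemma iso: "(\<Sum>k<2*g. u k * u (sg g k)) = (0::bit)"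
proof -
  have "{..<2*g} = {..<g} \<union> {g..<2*g}" by auto
  then have "(\<Sum>k<2*g. u k * u (sg g k)) = (\<Sum>k<g. u k * u (sg g k)) + (\<Sum>k\<in>{g..<2*g}. u k * u (sg g k))"
    by (metis (no_types, lifting) sum.union_disjoint finite_lessThan finite_atLeastLessThan
        disjoint_iff lessThan_iff atLeastLessThan_iff not_less)
  also have "(\<Sum>k\<in>{g..<2*g}. u k * u (sg g k)) = (\<Sum>k<g. u (k+g) * u (sg g (k+g)))"
    by (rule sum.reindex_bij_witness[of _ "\<lambda>k. k+g" "\<lambda>k. k - g"]) auto
  also have "\<dots> = (\<Sum>k<g. u k * u (sg g k))"
    by (rule sum.cong) (auto simp: sg_def mult.commute)
  finally show ?thesis by simp
qed

lemma sd1: "(a::nat) < n \<Longrightarrow> (\<Sum>k<n. of_bool (a = k) * f k) = (f a :: bit)"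
  by (simp add: of_bool_def if_distrib[of "\<lambda>x. x * _"] cong: if_cong)
lemma sd2: "(a::nat) < n \<Longrightarrow> (\<Sum>k<n. of_bool (k = a) * f k) = (f a :: bit)"
  by (simp add: of_bool_def if_distrib[of "\<lambda>x. x * _"] cong: if_cong)

declare sum_of_bool_eq[simp del] sum_mult_of_bool_eq[simp del] sum_of_bool_mult_eq[simp del]

definition Tm :: "nat \<Rightarrow> (nat \<Rightarrow> bit) \<Rightarrow> bit mat" where
  "Tm g u = mat (2*g) (2*g) (\<lambda>(i,k). of_bool (i = k) + u i * u (sg g k))"

lemma Tm_carrier: "Tm g u \<in> carrier_mat (2*g) (2*g)" by (simp add: Tm_def)

lemma Tm_sq: "Tm g u * Tm g u = 1\<^sub>m (2*g)"
proof (rule eq_matI)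
  fix i j assume ij: "i < dim_row (1\<^sub>m (2*g))" "j < dim_col (1\<^sub>m (2*g))"
  then have i: "i < 2*g" and j: "j < 2*g" by auto
  have "(Tm g u * Tm g u) $$ (i,j) = (\<Sum>k<2*g. (of_bool (i = k) + u i * u (sg g k)) * (of_bool (k = j) + u k * u (sg g j)))"
    using i j by (simp add: Tm_def scalar_prod_def lessThan_atLeast0)
  also have "\<dots> = (\<Sum>k<2*g. of_bool (i = k) * (of_bool (k = j) + u k * u (sg g j)))
      + (\<Sum>k<2*g. of_bool (k = j) * (u i * u (sg g k))) + u i * u (sg g j) * (\<Sum>k<2*g. u k * u (sg g k))"
    by (simp add: algebra_simps sum.distrib sum_distrib_left)
  also have "\<dots> = of_bool (i = j)"
    using i j by (simp add: sd1 sd2 iso)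
  finally show "(Tm g u * Tm g u) $$ (i,j) = 1\<^sub>m (2*g) $$ (i,j)" using i j by simp
qed (auto simp: Tm_def)

lemma Jform_carrier: "Jform g \<in> carrier_mat (2*g) (2*g)" by (simp add: Jform_def)

lemma Tm_Sp: "Tm g u \<in> Sp2 g"
  unfolding Sp2_def
proof (intro CollectI conjI Tm_carrier eq_matI)
  fix i j assume ij: "i < dim_row (Jform g)" "j < dim_col (Jform g)"
  then have i: "i < 2*g" and j: "j < 2*g" by (auto simp: Jform_def)
  have "(transpose_mat (Tm g u) * Jform g * Tm g u) $$ (i,j)
     = (\<Sum>k<2*g. \<Sum>l<2*g. (transpose_mat (Tm g u)) $$ (i,k) * Jform g $$ (k,l) * Tm g u $$ (l,j))"
    using i j by (subst mult3_entry[where n="2*g"]) (auto simp: Tm_carrier Jform_carrier)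
  also have "\<dots> = (\<Sum>k<2*g. \<Sum>l<2*g. (of_bool (k = i) + u k * u (sg g i)) * of_bool (l = sg g k) * (of_bool (l = j) + u l * u (sg g j)))"
    using i j by (intro sum.cong refl) (simp add: Tm_def Jform_entry)
  also have "\<dots> = (\<Sum>k<2*g. (of_bool (k = i) + u k * u (sg g i)) * (of_bool (sg g k = j) + u (sg g k) * u (sg g j)))"
  proof (intro sum.cong refl)
    fix k assume "k \<in> {..<2*g}"
    then have s: "sg g k < 2*g" by (simp add: sg_lt)
    have "(\<Sum>l<2*g. (of_bool (k = i) + u k * u (sg g i)) * of_bool (l = sg g k) * (of_bool (l = j) + u l * u (sg g j)))
      = (\<Sum>l<2*g. of_bool (l = sg g k) * ((of_bool (k = i) + u k * u (sg g i)) * (of_bool (l = j) + u l * u (sg g j))))"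
      by (intro sum.cong refl) (simp only: mult_ac)
    also have "\<dots> = (of_bool (k = i) + u k * u (sg g i)) * (of_bool (sg g k = j) + u (sg g k) * u (sg g j))"
      by (rule sd2[OF s])
    finally show "(\<Sum>l<2*g. (of_bool (k = i) + u k * u (sg g i)) * of_bool (l = sg g k) * (of_bool (l = j) + u l * u (sg g j)))
      = (of_bool (k = i) + u k * u (sg g i)) * (of_bool (sg g k = j) + u (sg g k) * u (sg g j))" .
  qed
  also have "\<dots> = (\<Sum>k<2*g. (of_bool (k = i) + u k * u (sg g i)) * (of_bool (k = sg g j) + u (sg g k) * u (sg g j)))"
    using j by (intro sum.cong refl) (auto simp: sg_eq)
  also have "\<dots> = (\<Sum>k<2*g. of_bool (k = i) * (of_bool (k = sg g j) + u (sg g k) * u (sg g j)))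
      + (\<Sum>k<2*g. of_bool (k = sg g j) * (u k * u (sg g i))) + u (sg g i) * u (sg g j) * (\<Sum>k<2*g. u k * u (sg g k))"
    by (simp add: algebra_simps sum.distrib sum_distrib_left)
  also have "\<dots> = of_bool (i = sg g j)"
  proof -
    have "(\<Sum>k<2*g. of_bool (k = i) * (of_bool (k = sg g j) + u (sg g k) * u (sg g j))) = of_bool (i = sg g j) + u (sg g i) * u (sg g j)"
      by (rule sd2[OF i])
    moreover have "(\<Sum>k<2*g. of_bool (k = sg g j) * (u k * u (sg g i))) = u (sg g j) * u (sg g i)"
      by (rule sd2[OF sg_lt[OF j]])
    ultimately show ?thesis by (simp add: iso mult.commute[of "u (sg g j)"])
  qed
  finally show "(transpose_mat (Tm g u) * Jform g * Tm g u) $$ (i,j) = Jform g $$ (i,j)"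
    using i j by (simp add: Jform_entry sg_eq) (metis sg_eq)
qed (auto simp: Jform_def Tm_def)

lemma conj_gen: "X \<in> M \<Longrightarrow> Tm g u * X * Tm g u - X \<in> conj_rel g M"
  unfolding conj_rel_def using Tm_Sp Tm_sq Tm_carrier by blast

definition genm :: "nat \<Rightarrow> (nat \<Rightarrow> bit) \<Rightarrow> bit mat \<Rightarrow> bit mat" where
  "genm g u X = mat (2*g) (2*g) (\<lambda>(i,j). u i * (\<Sum>k<2*g. u (sg g k) * X $$ (k,j))
      + (\<Sum>l<2*g. X $$ (i,l) * u l) * u (sg g j)
      + u i * (\<Sum>k<2*g. u (sg g k) * (\<Sum>l<2*g. X $$ (k,l) * u l)) * u (sg g j))"

lemma genm_eq:
  assumes X: "X \<in> carrier_mat (2*g) (2*g)"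
  shows "Tm g u * X * Tm g u - X = genm g u X"
proof (rule eq_matI)
  fix i j assume "i < dim_row (genm g u X)" "j < dim_col (genm g u X)"
  then have i: "i < 2*g" and j: "j < 2*g" by (auto simp: genm_def)
  define P where "P k = of_bool (i = k) + u i * u (sg g k)" for k
  define Q where "Q k = X $$ (k,j) + (\<Sum>l<2*g. X $$ (k,l) * u l) * u (sg g j)" for k
  have "(Tm g u * X * Tm g u) $$ (i,j) = (\<Sum>k<2*g. \<Sum>l<2*g. Tm g u $$ (i,k) * X $$ (k,l) * Tm g u $$ (l,j))"
    using i j X by (subst mult3_entry[where n="2*g"]) (auto simp: Tm_carrier)
  also have "\<dots> = (\<Sum>k<2*g. \<Sum>l<2*g. P k * X $$ (k,l) * (of_bool (l = j) + u l * u (sg g j)))"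
    using i j by (intro sum.cong refl) (simp add: Tm_def P_def)
  also have "\<dots> = (\<Sum>k<2*g. P k * Q k)"
  proof (intro sum.cong refl)
    fix k
    have "(\<Sum>l<2*g. P k * X $$ (k,l) * (of_bool (l = j) + u l * u (sg g j)))
       = P k * ((\<Sum>l<2*g. of_bool (l = j) * X $$ (k,l)) + (\<Sum>l<2*g. X $$ (k,l) * u l) * u (sg g j))"
      by (simp add: algebra_simps sum.distrib sum_distrib_left sum_distrib_right)
    also have "\<dots> = P k * Q k" using sd2[OF j, of "\<lambda>l. X $$ (k,l)"] by (simp add: Q_def)
    finally show "(\<Sum>l<2*g. P k * X $$ (k,l) * (of_bool (l = j) + u l * u (sg g j))) = P k * Q k" .
  qed
  also have "\<dots> = (\<Sum>k<2*g. of_bool (i = k) * Q k) + u i * (\<Sum>k<2*g. u (sg g k) * Q k)"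
    by (simp add: P_def algebra_simps sum.distrib sum_distrib_left)
  also have "\<dots> = Q i + u i * (\<Sum>k<2*g. u (sg g k) * Q k)"
    by (simp add: sd1[OF i])
  also have "(\<Sum>k<2*g. u (sg g k) * Q k) = (\<Sum>k<2*g. u (sg g k) * X $$ (k,j))
       + (\<Sum>k<2*g. u (sg g k) * (\<Sum>l<2*g. X $$ (k,l) * u l)) * u (sg g j)"
    by (simp add: Q_def algebra_simps sum.distrib sum_distrib_left sum_distrib_right)
  finally have "(Tm g u * X * Tm g u) $$ (i,j) = X $$ (i,j) + genm g u X $$ (i,j)"
    using i j by (simp add: Q_def genm_def algebra_simps)
  then show "(Tm g u * X * Tm g u - X) $$ (i,j) = genm g u X $$ (i,j)"
    using i j X by (simp add: Tm_carrier)
qed (use X in \<open>auto simp: genm_def Tm_def\<close>)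

lemma genm_rel: "X \<in> M \<Longrightarrow> M \<subseteq> carrier_mat (2*g) (2*g) \<Longrightarrow> genm g u X \<in> conj_rel g M"
  using conj_gen genm_eq by (metis subsetD)

lemma su1: "p < 2*g \<Longrightarrow> (\<Sum>k<2*g. of_bool (sg g k = p) * f k) = (f (sg g p) :: bit)"
proof -
  assume p: "p < 2*g"
  have "(\<Sum>k<2*g. of_bool (sg g k = p) * f k) = (\<Sum>k<2*g. of_bool (k = sg g p) * f k)"
    using p by (intro sum.cong refl) (simp add: sg_eq)
  also have "\<dots> = f (sg g p)" by (rule sd2[OF sg_lt[OF p]])
  finally show ?thesis .
qed

lemma su2: "p < (n::nat) \<Longrightarrow> (\<Sum>l<n. f l * of_bool (l = p)) = (f p :: bit)"
  using sd2[of p n f] by (simp add: mult.commute)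

definition e1 :: "nat \<Rightarrow> nat \<Rightarrow> bit" where "e1 p = (\<lambda>i. of_bool (i = p))"
definition e2 :: "nat \<Rightarrow> nat \<Rightarrow> nat \<Rightarrow> bit" where "e2 p q = (\<lambda>i. of_bool (i = p) + of_bool (i = q))"

lemma genm_e1:
  assumes p: "p < 2*g" and X: "X \<in> carrier_mat (2*g) (2*g)"
  shows "genm g (e1 p) X = mat (2*g) (2*g) (\<lambda>(i,j). of_bool (i = p) * X $$ (sg g p, j)
      + X $$ (i,p) * of_bool (sg g j = p) + of_bool (i = p) * X $$ (sg g p, p) * of_bool (sg g j = p))"
  unfolding genm_def e1_def using p
  by (intro eq_matI) (simp_all add: su1 su2)

lemma genm_e2:
  assumes p: "p < 2*g" and q: "q < 2*g" and X: "X \<in> carrier_mat (2*g) (2*g)"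
  shows "genm g (e2 p q) X = mat (2*g) (2*g) (\<lambda>(i,j). (of_bool (i = p) + of_bool (i = q)) * (X $$ (sg g p, j) + X $$ (sg g q, j))
      + (X $$ (i,p) + X $$ (i,q)) * (of_bool (sg g j = p) + of_bool (sg g j = q))
      + (of_bool (i = p) + of_bool (i = q)) * (X $$ (sg g p, p) + X $$ (sg g p, q) + X $$ (sg g q, p) + X $$ (sg g q, q))
         * (of_bool (sg g j = p) + of_bool (sg g j = q)))"
  unfolding genm_def e2_def using p q
  by (intro eq_matI) (simp_all del: ob_add add: su1 su2 distrib_left distrib_right sum.distrib add.assoc)

definition Gm :: "nat \<Rightarrow> nat \<Rightarrow> nat \<Rightarrow> bit mat" where
  "Gm g i j = mat (2*g) (2*g) (\<lambda>(r,s). of_bool (r = i \<and> s = sg g j) + of_bool (r = j \<and> s = sg g i))"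
definition Dm :: "nat \<Rightarrow> nat \<Rightarrow> bit mat" where
  "Dm g i = mat (2*g) (2*g) (\<lambda>(r,s). of_bool (r = i \<and> s = sg g i))"

lemma Gm_carrier[simp]: "Gm g i j \<in> carrier_mat (2*g) (2*g)" by (simp add: Gm_def)
lemma Gm_dims[simp]: "dim_row (Gm g i j) = 2*g" "dim_col (Gm g i j) = 2*g" by (simp_all add: Gm_def)
lemma Dm_dims[simp]: "dim_row (Dm g i) = 2*g" "dim_col (Dm g i) = 2*g" by (simp_all add: Dm_def)
lemma Dm_carrier[simp]: "Dm g i \<in> carrier_mat (2*g) (2*g)" by (simp add: Dm_def)

lemma sg_neq: "a < 2*g \<Longrightarrow> sg g a \<noteq> a" by (auto simp: sg_def)
lemma sg_neq': "a < 2*g \<Longrightarrow> a \<noteq> sg g a" by (auto simp: sg_def)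
lemma sg_eq': "a < 2*g \<Longrightarrow> b < 2*g \<Longrightarrow> (sg g a = b) = (a = sg g b)" by (auto simp: sg_def)
lemmas sgsimps = sg_neq sg_neq' sg_eq' sg_sg sg_lt

lemma gen1:
  assumes "p < 2*g" "k < 2*g" "k \<noteq> p" "k \<noteq> sg g p"
  shows "genm g (e1 p) (Gm g (sg g p) k) = Gm g p k"
  using assms sg_lt[of p g]
  by (subst genm_e1) (auto simp: Gm_def sgsimps intro!: eq_matI)

lemma gen3:
  assumes "p < 2*g"
  shows "genm g (e1 p) (Dm g (sg g p)) = Gm g p (sg g p) + Dm g p"
  using assms sg_lt[of p g]
  by (subst genm_e1) (auto simp: Gm_def Dm_def sgsimps intro!: eq_matI)

lemma gen2:
  assumes "p < 2*g" "q < 2*g" "q \<noteq> p" "q \<noteq> sg g p"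
  shows "genm g (e2 p q) (Gm g (sg g p) (sg g q)) = Gm g p (sg g p) + Gm g q (sg g q) + Gm g p (sg g q) + Gm g q (sg g p)"
  using assms sg_lt[of p g] sg_lt[of q g]
  by (subst genm_e2) (auto simp: Gm_def sgsimps intro!: eq_matI)

lemma gen4:
  assumes "p < 2*g" "q < 2*g" "q \<noteq> p" "q \<noteq> sg g p"
  shows "genm g (e2 p q) (Dm g (sg g p)) = Gm g p (sg g p) + Dm g p + Dm g q + Gm g q (sg g p) + Gm g p q"
  using assms sg_lt[of p g] sg_lt[of q g]
  by (subst genm_e2) (auto simp: Gm_def Dm_def sgsimps intro!: eq_matI)

abbreviation V :: "nat \<Rightarrow> bit mat set \<Rightarrow> bit mat set" where
  "V g M \<equiv> f2_span (0\<^sub>m (2*g) (2*g)) (conj_rel g M)"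

lemma Sp2_carrier: "A \<in> Sp2 g \<Longrightarrow> A \<in> carrier_mat (2*g) (2*g)" by (simp add: Sp2_def)

lemma conj_rel_carrier: "M \<subseteq> carrier_mat (2*g) (2*g) \<Longrightarrow> x \<in> conj_rel g M \<Longrightarrow> x \<in> carrier_mat (2*g) (2*g)"
  unfolding conj_rel_def using Sp2_carrier by (auto intro!: minus_carrier_mat)

lemma V_carrier: assumes "M \<subseteq> carrier_mat (2*g) (2*g)" shows "x \<in> V g M \<Longrightarrow> x \<in> carrier_mat (2*g) (2*g)"
  by (induction rule: f2_span.induct) (auto dest: conj_rel_carrier[OF assms])

lemma V_add: assumes M: "M \<subseteq> carrier_mat (2*g) (2*g)"
  shows "x \<in> V g M \<Longrightarrow> y \<in> V g M \<Longrightarrow> x + y \<in> V g M"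
proof (induction rule: f2_span.induct)
  case zero
  then show ?case using V_carrier[OF M] by simp
next
  case (add a x)
  have c: "a \<in> carrier_mat (2*g) (2*g)" "x \<in> carrier_mat (2*g) (2*g)" "y \<in> carrier_mat (2*g) (2*g)"
    using add conj_rel_carrier[OF M] V_carrier[OF M] by auto
  have "a + x + y = a + (x + y)"
    using assoc_add_mat[OF c] .
  then show ?case using add by (simp add: f2_span.add)
qed

lemma V_gen: "M \<subseteq> carrier_mat (2*g) (2*g) \<Longrightarrow> x \<in> conj_rel g M \<Longrightarrow> x \<in> V g M"
  using f2_span.add[OF _ f2_span.zero, of x "conj_rel g M" "0\<^sub>m (2*g) (2*g)"] conj_rel_carrier by force

lemma V_mono: assumes MM: "M \<subseteq> M'" shows "x \<in> V g M \<Longrightarrow> x \<in> V g M'"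
proof (induction rule: f2_span.induct)
  case zero then show ?case by (rule f2_span.zero)
next
  case (add a y)
  then have "a \<in> conj_rel g M'" using MM unfolding conj_rel_def by blast
  then show ?case using add by (simp add: f2_span.add)
qed

lemma V_zero: "0\<^sub>m (2*g) (2*g) \<in> V g M" by (rule f2_span.zero)

lemma mat_add_self: "(x :: bit mat) \<in> carrier_mat n m \<Longrightarrow> x + x = 0\<^sub>m n m"
  by (intro eq_matI) auto

lemma mat_cancel: "(x :: bit mat) \<in> carrier_mat n m \<Longrightarrow> y \<in> carrier_mat n m \<Longrightarrow> x + y + y = x"
  by (intro eq_matI) auto

lemma V_sub: assumes M: "M \<subseteq> carrier_mat (2*g) (2*g)"
  and "x + y \<in> V g M" "y \<in> V g M" "x \<in> carrier_mat (2*g) (2*g)"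
  shows "x \<in> V g M"
proof -
  have "x + y + y \<in> V g M" using assms V_add by blast
  moreover have "x + y + y = x" using assms V_carrier[OF M] by (intro mat_cancel) auto
  ultimately show ?thesis by simp
qed

lemma sp2_char: assumes "X \<in> carrier_mat (2*g) (2*g)"
  shows "X \<in> sp2 g \<longleftrightarrow> (\<forall>r<2*g. \<forall>s<2*g. X $$ (r, sg g s) = X $$ (s, sg g r))"
proof
  assume X: "X \<in> sp2 g"
  show "\<forall>r<2*g. \<forall>s<2*g. X $$ (r, sg g s) = X $$ (s, sg g r)"
  proof (intro allI impI)
    fix r s assume r: "r < 2*g" and s: "s < 2*g"
    consider "r < g" "s < g" | "r < g" "g \<le> s" | "g \<le> r" "s < g" | "g \<le> r" "g \<le> s" by linarith
    then show "X $$ (r, sg g s) = X $$ (s, sg g r)"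
    proof cases
      case 1 then show ?thesis using X unfolding sp2_def sg_def by auto
    next
      case 2
      then obtain b where "s = b + g" "b < g" using s by (metis add.commute le_Suc_ex add_less_cancel_left mult_2)
      then show ?thesis using X 2 unfolding sp2_def sg_def by auto
    next
      case 3
      then obtain a where "r = a + g" "a < g" using r by (metis add.commute le_Suc_ex add_less_cancel_left mult_2)
      then show ?thesis using X 3 unfolding sp2_def sg_def by auto
    next
      case 4
      then obtain a b where "r = a + g" "a < g" "s = b + g" "b < g" using r s
        by (metis add.commute le_Suc_ex add_less_cancel_left mult_2)
      then show ?thesis using X 4 unfolding sp2_def sg_def by auto
    qed
  qed
next
  assume H: "\<forall>r<2*g. \<forall>s<2*g. X $$ (r, sg g s) = X $$ (s, sg g r)"
  show "X \<in> sp2 g" unfolding sp2_def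
  proof (intro CollectI conjI assms allI impI)
    fix i j assume i: "i < g" and j: "j < g"
    show "X $$ (i + g, j + g) = X $$ (j, i)" using H[rule_format, of "i+g" j] i j by (simp add: sg_def)
    show "X $$ (i, j + g) = X $$ (j, i + g)" using H[rule_format, of i j] i j by (simp add: sg_def)
    show "X $$ (i + g, j) = X $$ (j + g, i)" using H[rule_format, of "i+g" "j+g"] i j by (simp add: sg_def)
  qed
qed

lemma Gm_sp: "i < 2*g \<Longrightarrow> j < 2*g \<Longrightarrow> Gm g i j \<in> sp2 g"
  by (subst sp2_char) (auto simp: Gm_def sgsimps)

lemma Dm_sp: "i < 2*g \<Longrightarrow> Dm g i \<in> sp2 g"
  by (subst sp2_char) (auto simp: Dm_def sgsimps)

lemma sp2_carrier: "X \<in> sp2 g \<Longrightarrow> X \<in> carrier_mat (2*g) (2*g)" by (simp add: sp2_def)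
lemma Ysub_sp2: "Ysub g \<subseteq> sp2 g" by (auto simp: Ysub_def)
lemma Ysub_carrier: "Ysub g \<subseteq> carrier_mat (2*g) (2*g)" using Ysub_sp2 sp2_carrier by blast
lemma sp2_carrier': "sp2 g \<subseteq> carrier_mat (2*g) (2*g)" using sp2_carrier by blast

lemma sp2_add: assumes "X \<in> sp2 g" "Y \<in> sp2 g" shows "X + Y \<in> sp2 g"
  using assms unfolding sp2_def by auto

lemma sp2_sym: "X \<in> sp2 g \<Longrightarrow> r < 2*g \<Longrightarrow> s < 2*g \<Longrightarrow> X $$ (r, sg g s) = X $$ (s, sg g r)"
  using sp2_char sp2_carrier by blast

lemma Ysub_diag: assumes "X \<in> Ysub g" "r < 2*g" shows "X $$ (r, sg g r) = 0"
proof (cases "r < g")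
  case True then show ?thesis using assms by (auto simp: Ysub_def sg_def)
next
  case False
  then obtain a where "r = a + g" "a < g" using assms(2) by (metis add.commute le_Suc_ex add_less_cancel_left mult_2 not_less)
  then show ?thesis using assms by (auto simp: Ysub_def sg_def)
qed

lemma YsubI: assumes "X \<in> sp2 g" "\<And>r. r < 2*g \<Longrightarrow> X $$ (r, sg g r) = 0" "(\<Sum>i<g. X $$ (i,i)) = 0"
  shows "X \<in> Ysub g"
  unfolding Ysub_def
proof (intro CollectI conjI assms allI impI)
  fix i assume "i < g"
  then show "X $$ (i, i + g) = 0" "X $$ (i + g, i) = 0"
    using assms(2)[of i] assms(2)[of "i+g"] by (auto simp: sg_def)
qed

lemma Ysub_add: assumes "X \<in> Ysub g" "Y \<in> Ysub g" shows "X + Y \<in> Ysub g"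
proof (rule YsubI)
  show "X + Y \<in> sp2 g" using assms Ysub_sp2 sp2_add by blast
  have c: "X \<in> carrier_mat (2*g) (2*g)" "Y \<in> carrier_mat (2*g) (2*g)" using assms Ysub_carrier by auto
  show "(X + Y) $$ (r, sg g r) = 0" if "r < 2*g" for r
    using c that Ysub_diag[OF assms(1) that] Ysub_diag[OF assms(2) that] sg_lt[OF that] by simp
  have "(\<Sum>i<g. (X + Y) $$ (i,i)) = (\<Sum>i<g. X $$ (i,i)) + (\<Sum>i<g. Y $$ (i,i))"
    using c by (simp add: sum.distrib)
  then show "(\<Sum>i<g. (X + Y) $$ (i,i)) = 0" using assms by (simp add: Ysub_def)
qed

lemma Gm_Y: assumes "i < 2*g" "j < 2*g" "j \<noteq> sg g i" shows "Gm g i j \<in> Ysub g"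
proof (rule YsubI)
  show "Gm g i j \<in> sp2 g" using assms(1,2) by (rule Gm_sp)
  show "Gm g i j $$ (r, sg g r) = 0" if "r < 2*g" for r
    using that assms by (auto simp: Gm_def sgsimps)
  show "(\<Sum>k<g. Gm g i j $$ (k,k)) = 0"
    using assms by (intro sum.neutral) (auto simp: Gm_def sgsimps)
qed

lemma H_trace: assumes "p < g" shows "(\<Sum>k<g. Gm g p (sg g p) $$ (k,k)) = 1"
proof -
  have "(\<Sum>k<g. Gm g p (sg g p) $$ (k,k)) = (\<Sum>k<g. of_bool (k = p) * 1)"
    using assms by (intro sum.cong refl) (auto simp: Gm_def sg_def)
  also have "\<dots> = 1" by (rule sd2[OF assms])
  finally show ?thesis .
qed

lemma HH_Y: assumes "p < g" "q < g" shows "Gm g p (sg g p) + Gm g q (sg g q) \<in> Ysub g"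
proof (rule YsubI)
  have pq: "p < 2*g" "q < 2*g" using assms by auto
  show "Gm g p (sg g p) + Gm g q (sg g q) \<in> sp2 g"
    using pq by (intro sp2_add Gm_sp sg_lt)
  show "(Gm g p (sg g p) + Gm g q (sg g q)) $$ (r, sg g r) = 0" if "r < 2*g" for r
    using that pq by (auto simp: Gm_def sgsimps)
  have "(\<Sum>k<g. (Gm g p (sg g p) + Gm g q (sg g q)) $$ (k,k))
      = (\<Sum>k<g. Gm g p (sg g p) $$ (k,k) + Gm g q (sg g q) $$ (k,k))"
    by (intro sum.cong refl) (auto simp: Gm_def simp del: ob_add)
  also have "\<dots> = (\<Sum>k<g. Gm g p (sg g p) $$ (k,k)) + (\<Sum>k<g. Gm g q (sg g q) $$ (k,k))"
    by (rule sum.distrib)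
  finally have "(\<Sum>k<g. (Gm g p (sg g p) + Gm g q (sg g q)) $$ (k,k))
      = (\<Sum>k<g. Gm g p (sg g p) $$ (k,k)) + (\<Sum>k<g. Gm g q (sg g q) $$ (k,k))" .
  then show "(\<Sum>k<g. (Gm g p (sg g p) + Gm g q (sg g q)) $$ (k,k)) = 0"
    using H_trace[OF assms(1)] H_trace[OF assms(2)] by simp
qed

lemma Y1: assumes "p < 2*g" "k < 2*g" "k \<noteq> p" "k \<noteq> sg g p"
  shows "Gm g p k \<in> V g (Ysub g)"
proof -
  have "Gm g (sg g p) k \<in> Ysub g"
    using assms by (intro Gm_Y) (auto simp: sgsimps)
  then have "genm g (e1 p) (Gm g (sg g p) k) \<in> conj_rel g (Ysub g)"
    using Ysub_carrier by (rule genm_rel)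
  then show ?thesis using gen1[OF assms] V_gen[OF Ysub_carrier] by simp
qed

lemma Y2: assumes p: "p < 2*g" and q: "q < 2*g" and "q \<noteq> p" "q \<noteq> sg g p"
  shows "Gm g p (sg g p) + Gm g q (sg g q) \<in> V g (Ysub g)"
proof -
  have "Gm g (sg g p) (sg g q) \<in> Ysub g"
    using assms by (intro Gm_Y) (auto simp: sgsimps)
  then have "genm g (e2 p q) (Gm g (sg g p) (sg g q)) \<in> conj_rel g (Ysub g)"
    using Ysub_carrier by (rule genm_rel)
  then have a: "Gm g p (sg g p) + Gm g q (sg g q) + Gm g p (sg g q) + Gm g q (sg g p) \<in> V g (Ysub g)"
    using gen2[OF assms] V_gen[OF Ysub_carrier] by simp
  have b: "Gm g p (sg g q) \<in> V g (Ysub g)" using assms by (intro Y1) (auto simp: sgsimps)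
  have c: "Gm g q (sg g p) \<in> V g (Ysub g)" using assms by (intro Y1) (auto simp: sgsimps)
  have "Gm g p (sg g p) + Gm g q (sg g q) + Gm g p (sg g q) \<in> V g (Ysub g)"
    by (rule V_sub[OF Ysub_carrier a c]) simp
  then show ?thesis
    by (rule V_sub[OF Ysub_carrier _ b]) simp
qed

lemma S3: assumes p: "p < 2*g" shows "Gm g p (sg g p) + Dm g p \<in> V g (sp2 g)"
proof -
  have "Dm g (sg g p) \<in> sp2 g" using p by (intro Dm_sp sg_lt)
  then have "genm g (e1 p) (Dm g (sg g p)) \<in> conj_rel g (sp2 g)"
    using sp2_carrier' by (rule genm_rel)
  then show ?thesis using gen3[OF p] V_gen[OF sp2_carrier'] by simp
qed

lemma S4: assumes p: "p < 2*g" and q: "q < 2*g" and "q \<noteq> p" "q \<noteq> sg g p"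
  shows "Gm g p (sg g p) + Dm g p + Dm g q \<in> V g (sp2 g)"
proof -
  have "Dm g (sg g p) \<in> sp2 g" using p by (intro Dm_sp sg_lt)
  then have "genm g (e2 p q) (Dm g (sg g p)) \<in> conj_rel g (sp2 g)"
    using sp2_carrier' by (rule genm_rel)
  then have a: "Gm g p (sg g p) + Dm g p + Dm g q + Gm g q (sg g p) + Gm g p q \<in> V g (sp2 g)"
    using gen4[OF assms] V_gen[OF sp2_carrier'] by simp
  have b: "Gm g q (sg g p) \<in> V g (sp2 g)" using assms by (intro V_mono[OF Ysub_sp2] Y1) (auto simp: sgsimps)
  have c: "Gm g p q \<in> V g (sp2 g)" using assms by (intro V_mono[OF Ysub_sp2] Y1) (auto simp: sgsimps)
  have "Gm g p (sg g p) + Dm g p + Dm g q + Gm g q (sg g p) \<in> V g (sp2 g)"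
    by (rule V_sub[OF sp2_carrier' a c]) simp
  then show ?thesis
    by (rule V_sub[OF sp2_carrier' _ b]) simp
qed

lemma D_in: assumes g: "g \<ge> 2" and q: "q < 2*g" shows "Dm g q \<in> V g (sp2 g)"
proof -
  define p where "p = (if q = 0 \<or> q = g then 1 else (0::nat))"
  have p: "p < 2*g" "q \<noteq> p" "q \<noteq> sg g p" using g q by (auto simp: p_def sg_def)
  have a: "Gm g p (sg g p) + Dm g p + Dm g q \<in> V g (sp2 g)" by (rule S4[OF p(1) q p(2,3)])
  have b: "Gm g p (sg g p) + Dm g p \<in> V g (sp2 g)" by (rule S3[OF p(1)])
  have "Dm g q + (Gm g p (sg g p) + Dm g p) = Gm g p (sg g p) + Dm g p + Dm g q"
    by (intro eq_matI) (simp_all add: Gm_def Dm_def add_ac del: ob_add)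
  then have "Dm g q + (Gm g p (sg g p) + Dm g p) \<in> V g (sp2 g)" using a by simp
  then show ?thesis by (rule V_sub[OF sp2_carrier' _ b]) simp
qed

lemma H_in: assumes g: "g \<ge> 2" and p: "p < 2*g" shows "Gm g p (sg g p) \<in> V g (sp2 g)"
  by (rule V_sub[OF sp2_carrier' S3[OF p] D_in[OF g p]]) simp

definition supp :: "nat \<Rightarrow> bit mat \<Rightarrow> (nat \<times> nat) set" where
  "supp g X = {(r,s). r < 2*g \<and> s < 2*g \<and> X $$ (r,s) = 1}"

lemma supp_finite: "finite (supp g X)"
  by (rule finite_subset[of _ "{..<2*g} \<times> {..<2*g}"]) (auto simp: supp_def)

lemma V_all:
  assumes M: "M \<subseteq> carrier_mat (2*g) (2*g)"
    and step: "\<And>X r s. X \<in> M \<Longrightarrow> r < 2*g \<Longrightarrow> s < 2*g \<Longrightarrow> X $$ (r,s) = 1 \<Longrightarrow>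
       \<exists>B. B \<in> V g M \<and> B \<in> carrier_mat (2*g) (2*g) \<and> X + B \<in> M \<and> B $$ (r,s) = 1 \<and>
           (\<forall>a<2*g. \<forall>b<2*g. B $$ (a,b) = 1 \<longrightarrow> X $$ (a,b) = 1)"
  shows "X \<in> M \<Longrightarrow> X \<in> V g M"
proof (induction "card (supp g X)" arbitrary: X rule: less_induct)
  case less
  have XC: "X \<in> carrier_mat (2*g) (2*g)" using less.prems M by blast
  show ?case
  proof (cases "supp g X = {}")
    case True
    have "X = 0\<^sub>m (2*g) (2*g)"
    proof (rule eq_matI)
      fix i j assume "i < dim_row (0\<^sub>m (2*g) (2*g))" "j < dim_col (0\<^sub>m (2*g) (2*g))"
      then show "X $$ (i,j) = 0\<^sub>m (2*g) (2*g) $$ (i,j)" using True by (auto simp: supp_def)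
    qed (use XC in auto)
    then show ?thesis by (simp add: V_zero)
  next
    case False
    then obtain r s where rs: "r < 2*g" "s < 2*g" "X $$ (r,s) = 1" by (auto simp: supp_def)
    obtain B where B: "B \<in> V g M" "B \<in> carrier_mat (2*g) (2*g)" "X + B \<in> M" "B $$ (r,s) = 1"
      "\<forall>a<2*g. \<forall>b<2*g. B $$ (a,b) = 1 \<longrightarrow> X $$ (a,b) = 1"
      using step[OF less.prems rs] by blast
    have sub: "supp g (X + B) \<subseteq> supp g X - {(r,s)}"
    proof
      fix x assume "x \<in> supp g (X + B)"
      then obtain a b where x: "x = (a,b)" "a < 2*g" "b < 2*g" "(X + B) $$ (a,b) = 1" by (auto simp: supp_def)
      then have e: "X $$ (a,b) + B $$ (a,b) = 1" using B(2) by simp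
      have "X $$ (a,b) = 1"
      proof (rule ccontr)
        assume "X $$ (a,b) \<noteq> 1"
        then have "X $$ (a,b) = 0" by simp
        then have "B $$ (a,b) = 1" using e by simp
        then show False using B(5) x \<open>X $$ (a,b) = 0\<close> by auto
      qed
      moreover have "B $$ (a,b) = 0" using e \<open>X $$ (a,b) = 1\<close> by (cases "B $$ (a,b)") auto
      ultimately show "x \<in> supp g X - {(r,s)}" using x B(4) by (auto simp: supp_def)
    qed
    have "supp g X - {(r,s)} \<subset> supp g X" using rs by (auto simp: supp_def)
    then have "card (supp g (X + B)) < card (supp g X)"
      using sub supp_finite by (meson psubset_card_mono subset_psubset_trans finite_subset)
    then have "X + B \<in> V g M" using less.hyps B(3) by blast
    then show ?thesis by (rule V_sub[OF M _ B(1) XC])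
  qed
qed

lemma odd_sum: assumes "(\<Sum>i<(g::nat). f i) = (0::bit)" "r0 < g" "f r0 = 1"
  shows "\<exists>k<g. k \<noteq> r0 \<and> f k = 1"
proof (rule ccontr)
  assume "\<not> ?thesis"
  then have z: "\<forall>k\<in>{..<g} - {r0}. f k = 0" by auto
  have "(\<Sum>i<g. f i) = f r0 + (\<Sum>i\<in>{..<g} - {r0}. f i)"
    using assms(2) by (subst sum.remove[of _ r0]) auto
  also have "(\<Sum>i\<in>{..<g} - {r0}. f i) = 0" using z by (intro sum.neutral) auto
  finally show False using assms by simp
qed

lemma Gm_supp_step: assumes X: "X \<in> sp2 g" and r: "r < 2*g" and s: "s < 2*g" and rs: "X $$ (r,s) = 1"
  and n1: "s \<noteq> sg g r" and n2: "s \<noteq> r"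
  shows "Gm g r (sg g s) $$ (r,s) = 1 \<and> (\<forall>a<2*g. \<forall>b<2*g. Gm g r (sg g s) $$ (a,b) = 1 \<longrightarrow> X $$ (a,b) = 1)"
proof -
  have sym: "X $$ (sg g s, sg g r) = X $$ (r, s)"
    using sp2_sym[OF X sg_lt[OF s] r] sg_sg[OF s] by simp
  show ?thesis using r s rs sym n1 n2 sg_lt[OF s] sg_lt[OF r]
    by (auto simp: Gm_def sgsimps)
qed

lemma H_supp_step: assumes X: "X \<in> sp2 g" and r: "r < 2*g" and rs: "X $$ (r,r) = 1"
  shows "Gm g r (sg g r) $$ (r,r) = 1 \<and> (\<forall>a<2*g. \<forall>b<2*g. Gm g r (sg g r) $$ (a,b) = 1 \<longrightarrow> X $$ (a,b) = 1)"
proof -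
  have sym: "X $$ (sg g r, sg g r) = X $$ (r, r)"
    using sp2_sym[OF X sg_lt[OF r] r] sg_sg[OF r] by simp
  show ?thesis using r rs sym sg_lt[OF r]
    by (auto simp: Gm_def sgsimps)
qed

lemma Y_all: assumes "X \<in> Ysub g" shows "X \<in> V g (Ysub g)"
proof (rule V_all[OF Ysub_carrier _ assms])
  fix X r s assume X: "X \<in> Ysub g" and r: "r < 2*g" and s: "s < 2*g" and rs: "X $$ (r,s) = 1"
  have Xs: "X \<in> sp2 g" using X Ysub_sp2 by blast
  have n1: "s \<noteq> sg g r" using Ysub_diag[OF X r] rs by auto
  show "\<exists>B. B \<in> V g (Ysub g) \<and> B \<in> carrier_mat (2*g) (2*g) \<and> X + B \<in> Ysub g \<and> B $$ (r,s) = 1 \<and>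
           (\<forall>a<2*g. \<forall>b<2*g. B $$ (a,b) = 1 \<longrightarrow> X $$ (a,b) = 1)"
  proof (cases "s = r")
    case False
    let ?B = "Gm g r (sg g s)"
    have j: "sg g s \<noteq> r" "sg g s \<noteq> sg g r" using n1 False r s by (auto simp: sgsimps)
    have "?B \<in> V g (Ysub g)" using Y1[OF r sg_lt[OF s] j] .
    moreover have "?B \<in> Ysub g" using r sg_lt[OF s] j(2) by (intro Gm_Y) auto
    ultimately show ?thesis using Gm_supp_step[OF Xs r s rs n1 False] Ysub_add[OF X] by auto
  next
    case True
    define r0 where "r0 = (if r < g then r else r - g)"
    have r0: "r0 < g" "r = r0 \<or> r = sg g r0" using r by (auto simp: r0_def sg_def)
    have r02: "r0 < 2*g" using r0 by simp
    have x0: "X $$ (r0, r0) = 1"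
      using r0(2) rs True sp2_sym[OF Xs sg_lt[OF r02] r02] sg_sg[OF r02] by auto
    have tr: "(\<Sum>i<g. X $$ (i,i)) = 0" using X by (simp add: Ysub_def)
    obtain k where k: "k < g" "k \<noteq> r0" "X $$ (k,k) = 1" using odd_sum[OF tr r0(1) x0] by blast
    have k2: "k < 2*g" using k by simp
    have ks: "k \<noteq> sg g r0" using k r0 by (auto simp: sg_def)
    let ?B = "Gm g r0 (sg g r0) + Gm g k (sg g k)"
    have "?B \<in> V g (Ysub g)" using Y2[OF r02 k2 k(2) ks] .
    moreover have "?B \<in> Ysub g" using HH_Y[OF r0(1) k(1)] .
    moreover have "?B $$ (r,s) = 1 \<and> (\<forall>a<2*g. \<forall>b<2*g. ?B $$ (a,b) = 1 \<longrightarrow> X $$ (a,b) = 1)"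
    proof -
      have h1: "Gm g r0 (sg g r0) $$ (r0,r0) = 1 \<and> (\<forall>a<2*g. \<forall>b<2*g. Gm g r0 (sg g r0) $$ (a,b) = 1 \<longrightarrow> X $$ (a,b) = 1)"
        by (rule H_supp_step[OF Xs r02 x0])
      have h2: "Gm g k (sg g k) $$ (k,k) = 1 \<and> (\<forall>a<2*g. \<forall>b<2*g. Gm g k (sg g k) $$ (a,b) = 1 \<longrightarrow> X $$ (a,b) = 1)"
        by (rule H_supp_step[OF Xs k2 k(3)])
      have "\<forall>a<2*g. \<forall>b<2*g. ?B $$ (a,b) = 1 \<longrightarrow> X $$ (a,b) = 1"
      proof (intro allI impI)
        fix a b assume ab: "a < 2*g" "b < 2*g" "?B $$ (a,b) = 1"
        then have "Gm g r0 (sg g r0) $$ (a,b) + Gm g k (sg g k) $$ (a,b) = 1" by simp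
        then have "Gm g r0 (sg g r0) $$ (a,b) = 1 \<or> Gm g k (sg g k) $$ (a,b) = 1"
          by (cases "Gm g r0 (sg g r0) $$ (a,b)") auto
        then show "X $$ (a,b) = 1" using h1 h2 ab by blast
      qed
      moreover have "?B $$ (r,s) = 1"
        using True r0 r02 k2 k(2) ks sg_lt[OF r02] sg_lt[OF k2] by (auto simp: Gm_def sgsimps)
      ultimately show ?thesis by blast
    qed
    ultimately show ?thesis using Ysub_add[OF X] by auto
  qed
qed

lemma sp_all: assumes g: "g \<ge> 2" and "X \<in> sp2 g" shows "X \<in> V g (sp2 g)"
proof (rule V_all[OF sp2_carrier' _ assms(2)])
  fix X r s assume X: "X \<in> sp2 g" and r: "r < 2*g" and s: "s < 2*g" and rs: "X $$ (r,s) = 1"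
  show "\<exists>B. B \<in> V g (sp2 g) \<and> B \<in> carrier_mat (2*g) (2*g) \<and> X + B \<in> sp2 g \<and> B $$ (r,s) = 1 \<and>
           (\<forall>a<2*g. \<forall>b<2*g. B $$ (a,b) = 1 \<longrightarrow> X $$ (a,b) = 1)"
  proof (cases "s = sg g r")
    case True
    have "Dm g r $$ (r,s) = 1 \<and> (\<forall>a<2*g. \<forall>b<2*g. Dm g r $$ (a,b) = 1 \<longrightarrow> X $$ (a,b) = 1)"
      using True r s rs by (auto simp: Dm_def)
    then show ?thesis using D_in[OF g r] Dm_sp[OF r] sp2_add[OF X] by auto
  next
    case n1: False
    show ?thesis
    proof (cases "s = r")
      case True
      then show ?thesis using H_supp_step[OF X r] rs H_in[OF g r] Gm_sp[OF r sg_lt[OF r]] sp2_add[OF X] by auto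
    next
      case False
      have j: "sg g s \<noteq> r" "sg g s \<noteq> sg g r" using n1 False r s by (auto simp: sgsimps)
      have "Gm g r (sg g s) \<in> V g (sp2 g)" using V_mono[OF Ysub_sp2 Y1[OF r sg_lt[OF s] j]] .
      then show ?thesis using Gm_supp_step[OF X r s rs n1 False] Gm_sp[OF r sg_lt[OF s]] sp2_add[OF X] by auto
    qed
  qed
qed

lemma U_all: "H0_U_zero g"
  unfolding H0_U_zero_def
proof
  fix v :: "bit vec" assume v: "v \<in> carrier_vec (2*g)"
  show "v \<in> f2_span (0\<^sub>v (2*g)) (nat_rel g)"
  proof (cases "\<forall>i<2*g. v $ i = 0")
    case True
    then have "v = 0\<^sub>v (2*g)" using v by (intro eq_vecI) auto
    then show ?thesis by (simp add: f2_span.zero)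
  next
    case False
    then obtain k where k: "k < 2*g" "v $ k = 1" by auto
    define w where "w = vec (2*g) (\<lambda>i. of_bool (i = sg g k) :: bit)"
    have wc: "w \<in> carrier_vec (2*g)" by (simp add: w_def)
    have "Tm g (\<lambda>i. v $ i) *\<^sub>v w - w = v"
    proof (rule eq_vecI)
      fix i assume "i < dim_vec v"
      then have i: "i < 2*g" using v by simp
      have "(Tm g (\<lambda>i. v $ i) *\<^sub>v w) $ i = (\<Sum>l<2*g. Tm g (\<lambda>i. v $ i) $$ (i,l) * of_bool (l = sg g k))"
        using i by (simp add: Tm_def w_def scalar_prod_def lessThan_atLeast0)
      also have "\<dots> = Tm g (\<lambda>i. v $ i) $$ (i, sg g k)" by (rule su2[OF sg_lt[OF k(1)]])
      also have "\<dots> = of_bool (i = sg g k) + v $ i"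
        using i k sg_lt[OF k(1)] by (simp add: Tm_def sg_sg)
      finally show "(Tm g (\<lambda>i. v $ i) *\<^sub>v w - w) $ i = v $ i"
        using i wc by (simp add: Tm_def w_def)
    qed (use v in \<open>auto simp: Tm_def w_def\<close>)
    then have "\<exists>A x. v = A *\<^sub>v x - x \<and> A \<in> Sp2 g \<and> x \<in> carrier_vec (2*g)"
      using Tm_Sp[of g "\<lambda>i. v $ i"] wc by metis
    then have "v \<in> nat_rel g" unfolding nat_rel_def by simp
    then have "v + 0\<^sub>v (2*g) \<in> f2_span (0\<^sub>v (2*g)) (nat_rel g)" by (intro f2_span.add f2_span.zero)
    then show ?thesis using v by simp
  qed
qed

theorem lemma5p5:
  shows "(\<forall>g::nat. g \<ge> 1 \<longrightarrow> H0_conj_zero g (Ysub g) \<and> H0_U_zero g)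
       \<and> (\<forall>g::nat. g \<ge> 2 \<longrightarrow> H0_conj_quot_zero g (sp2 g) (Ysub g) \<and> H0_conj_zero g (sp2 g))"
proof (intro conjI allI impI)
  fix g :: nat
  show "H0_conj_zero g (Ysub g)" unfolding H0_conj_zero_def using Y_all by blast
  show "H0_U_zero g" by (rule U_all)
next
  fix g :: nat assume g: "g \<ge> 2"
  show "H0_conj_zero g (sp2 g)" unfolding H0_conj_zero_def using sp_all[OF g] by blast
  show "H0_conj_quot_zero g (sp2 g) (Ysub g)" unfolding H0_conj_quot_zero_def
  proof
    fix X assume X: "X \<in> sp2 g"
    have "X - X \<in> Ysub g"
    proof -
      have "X - X = 0\<^sub>m (2*g) (2*g)" using sp2_carrier[OF X] by (intro eq_matI) auto
      moreover have "0\<^sub>m (2*g) (2*g) \<in> Ysub g"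
        by (rule YsubI) (auto simp: sp2_def sg_lt)
      ultimately show ?thesis by simp
    qed
    then show "\<exists>W\<in>V g (sp2 g). X - W \<in> Ysub g" using sp_all[OF g X] by blast
  qed
qed

end
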